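(* In the Gaussian sequential learning model with binary states described in the context, for any privacy budget $\varepsilon\in(0,\infty)$, asymptotic learning occurs under the smooth randomized response strategy, i.e., $\lim_{n\to\infty}\mathbb{P}(a_n=\theta)=1$.
   Context: Gaussian model: unknown state $\theta\in\{-1,+1\}$ with uniform prior; agents $n=1,2,\dots$ act in sequence; agent $n$ privately observes $s_n\sim\mathcal{N}(\theta,\sigma^2)$, i.i.d. given $\theta$, $\sigma>0$. The public log-likelihood ratio is $l_n=\log\frac{\mathbb{P}(\theta=+1\mid x_1,\dots,x_{n-1})}{\mathbb{P}(\theta=-1\mid x_1,\dots,x_{n-1})}$ ($l_1=0$), where $x_i$ are reported actions. With $t(l)=-\sigma^2l/2$, agent $n$'s intended action is $a_n=+1$ if $s_n>t(l_n)$ and $a_n=-1$ otherwise. Under the smooth randomized response strategy with budget $\varepsilon$, the agent reports $x_n=a_n$ with probability $1-u_n(s_n)$ and $x_n=-a_n$ with probability $u_n(s_n)=\frac12e^{-\varepsilon|s_n-t(l_n)|}$; the public updates $l_{n+1}=l_n+\log\frac{\mathbb{P}(x_n\mid l_n,\theta=+1)}{\mathbb{P}(x_n\mid l_n,\theta=-1)}$ by Bayes' rule. Asymptotic learning means $\lim_{n\to\infty}\mathbb{P}(a_n=\theta)=1$. *)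

theory Defs
  imports "HOL-Probability.Probability"
begin

text \<open>Gaussian sequential learning with smooth randomized response.
  States theta are the reals 1 and -1; a report x = +1 is encoded as True, x = -1 as False.\<close>

definition thr :: "real \<Rightarrow> real \<Rightarrow> real" where
  "thr \<sigma> l = - (\<sigma>\<^sup>2 * l) / 2"

definition flip_prob :: "real \<Rightarrow> real \<Rightarrow> real \<Rightarrow> real \<Rightarrow> real" where
  "flip_prob \<sigma> \<epsilon> l s = exp (- \<epsilon> * \<bar>s - thr \<sigma> l\<bar>) / 2"

definition signal_dist :: "real \<Rightarrow> real \<Rightarrow> real measure" where
  "signal_dist \<sigma> \<theta> = density lborel (normal_density \<theta> \<sigma>)"

definition intended :: "real \<Rightarrow> real \<Rightarrow> real \<Rightarrow> bool" where
  "intended \<sigma> l s \<longleftrightarrow> s > thr \<sigma> l"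

definition report_plus_prob :: "real \<Rightarrow> real \<Rightarrow> real \<Rightarrow> real \<Rightarrow> real" where
  "report_plus_prob \<sigma> \<epsilon> \<theta> l =
     (\<integral>s. (if intended \<sigma> l s then 1 - flip_prob \<sigma> \<epsilon> l s else flip_prob \<sigma> \<epsilon> l s)
        \<partial>signal_dist \<sigma> \<theta>)"

definition report_prob :: "real \<Rightarrow> real \<Rightarrow> real \<Rightarrow> real \<Rightarrow> bool \<Rightarrow> real" where
  "report_prob \<sigma> \<epsilon> \<theta> l x =
     (if x then report_plus_prob \<sigma> \<epsilon> \<theta> l else 1 - report_plus_prob \<sigma> \<epsilon> \<theta> l)"

definition llr_update :: "real \<Rightarrow> real \<Rightarrow> real \<Rightarrow> bool \<Rightarrow> real" where
  "llr_update \<sigma> \<epsilon> l x = l + ln (report_prob \<sigma> \<epsilon> 1 l x / report_prob \<sigma> \<epsilon> (-1) l x)"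

definition public_llr :: "real \<Rightarrow> real \<Rightarrow> bool list \<Rightarrow> real" where
  "public_llr \<sigma> \<epsilon> xs = foldl (llr_update \<sigma> \<epsilon>) 0 xs"

primrec history :: "real \<Rightarrow> real \<Rightarrow> real \<Rightarrow> nat \<Rightarrow> bool list pmf" where
  "history \<sigma> \<epsilon> \<theta> 0 = return_pmf []"
| "history \<sigma> \<epsilon> \<theta> (Suc k) =
     bind_pmf (history \<sigma> \<epsilon> \<theta> k)
       (\<lambda>xs. map_pmf (\<lambda>b. xs @ [b])
               (bernoulli_pmf (report_plus_prob \<sigma> \<epsilon> \<theta> (public_llr \<sigma> \<epsilon> xs))))"

text \<open>P(a_n = theta) for agent n = k + 1, with uniform prior on theta in {-1,+1}:
  conditional on theta, the agent's signal s_n is independent of the history x_1..x_{n-1}.\<close>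
definition prob_correct :: "real \<Rightarrow> real \<Rightarrow> nat \<Rightarrow> real" where
  "prob_correct \<sigma> \<epsilon> k =
     (1/2) * measure_pmf.expectation (history \<sigma> \<epsilon> 1 k)
               (\<lambda>xs. measure (signal_dist \<sigma> 1) {s. intended \<sigma> (public_llr \<sigma> \<epsilon> xs) s})
   + (1/2) * measure_pmf.expectation (history \<sigma> \<epsilon> (-1) k)
               (\<lambda>xs. measure (signal_dist \<sigma> (-1)) {s. \<not> intended \<sigma> (public_llr \<sigma> \<epsilon> xs) s})"

end

theory Submission
  imports Defs "HOL-Real_Asymp.Real_Asymp"
begin


definition gf :: "real \<Rightarrow> real \<Rightarrow> real \<Rightarrow> real \<Rightarrow> real" where
  "gf \<sigma> \<epsilon> l s = (if intended \<sigma> l s then 1 - flip_prob \<sigma> \<epsilon> l s else flip_prob \<sigma> \<epsilon> l s)"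

lemma rpp_gf: "report_plus_prob \<sigma> \<epsilon> \<theta> l = (\<integral>s. gf \<sigma> \<epsilon> l s \<partial>signal_dist \<sigma> \<theta>)"
  unfolding report_plus_prob_def gf_def by simp

lemma gf_meas[measurable]: "gf \<sigma> \<epsilon> l \<in> borel_measurable borel"
  unfolding gf_def flip_prob_def intended_def by measurable

lemma flip_bounds: "\<epsilon> > 0 \<Longrightarrow> 0 < flip_prob \<sigma> \<epsilon> l s \<and> flip_prob \<sigma> \<epsilon> l s \<le> 1/2"
proof -
  assume e: "\<epsilon> > 0"
  have "- \<epsilon> * \<bar>s - thr \<sigma> l\<bar> \<le> 0" using e by (simp add: mult_nonneg_nonneg)
  then have "exp (- \<epsilon> * \<bar>s - thr \<sigma> l\<bar>) \<le> 1" by simp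
  then show ?thesis unfolding flip_prob_def by simp
qed

lemma gf_bounds: "\<epsilon> > 0 \<Longrightarrow> 0 < gf \<sigma> \<epsilon> l s \<and> gf \<sigma> \<epsilon> l s < 1"
  using flip_bounds[of \<epsilon> \<sigma> l s] unfolding gf_def by (cases "intended \<sigma> l s") simp_all

lemma sd_prob: "\<sigma> > 0 \<Longrightarrow> prob_space (signal_dist \<sigma> \<theta>)"
  unfolding signal_dist_def by (rule prob_space_normal_density)

lemma sd_sets[simp, measurable_cong]: "sets (signal_dist \<sigma> \<theta>) = sets borel"
  unfolding signal_dist_def by simp

lemma gf_int: "\<sigma> > 0 \<Longrightarrow> \<epsilon> > 0 \<Longrightarrow> integrable (signal_dist \<sigma> \<theta>) (gf \<sigma> \<epsilon> l)"
proof -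
  assume sg: "\<sigma> > 0" and e: "\<epsilon> > 0"
  interpret prob_space "signal_dist \<sigma> \<theta>" by (rule sd_prob[OF sg])
  show ?thesis
    by (rule integrable_const_bound[where B=1]) (use gf_bounds[OF e] in \<open>auto simp: less_imp_le\<close>)
qed

lemma rpp_bounds: "\<sigma> > 0 \<Longrightarrow> \<epsilon> > 0 \<Longrightarrow> 0 < report_plus_prob \<sigma> \<epsilon> \<theta> l \<and> report_plus_prob \<sigma> \<epsilon> \<theta> l < 1"
proof -
  assume sg: "\<sigma> > 0" and e: "\<epsilon> > 0"
  interpret prob_space "signal_dist \<sigma> \<theta>" by (rule sd_prob[OF sg])
  have "(\<integral>s. 0 \<partial>signal_dist \<sigma> \<theta>) < (\<integral>s. gf \<sigma> \<epsilon> l s \<partial>signal_dist \<sigma> \<theta>)"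
    by (rule integral_less_AE_space) (use gf_bounds[OF e] gf_int[OF sg e] in \<open>auto simp: emeasure_space_1\<close>)
  moreover have "(\<integral>s. gf \<sigma> \<epsilon> l s \<partial>signal_dist \<sigma> \<theta>) < (\<integral>s. 1 \<partial>signal_dist \<sigma> \<theta>)"
    by (rule integral_less_AE_space) (use gf_bounds[OF e] gf_int[OF sg e] in \<open>auto simp: emeasure_space_1\<close>)
  ultimately show ?thesis unfolding rpp_gf by (simp add: prob_space)
qed



lemma gf_mono:
  assumes e: "\<epsilon> > 0" and xy: "x \<le> y"
  shows "gf \<sigma> \<epsilon> l x \<le> gf \<sigma> \<epsilon> l y"
proof -
  let ?t = "thr \<sigma> l"
  have fb: "\<And>s. 0 < flip_prob \<sigma> \<epsilon> l s \<and> flip_prob \<sigma> \<epsilon> l s \<le> 1/2" using flip_bounds[OF e] by blast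
  consider "y \<le> ?t" | "x \<le> ?t" "?t < y" | "?t < x" using xy by linarith
  then show ?thesis
  proof cases
    case 1
    then have "- \<epsilon> * \<bar>x - ?t\<bar> \<le> - \<epsilon> * \<bar>y - ?t\<bar>" using xy e by (simp add: mult_left_mono)
    then show ?thesis using 1 xy unfolding gf_def intended_def flip_prob_def by simp
  next
    case 2
    then show ?thesis using fb[of x] fb[of y] unfolding gf_def intended_def by simp
  next
    case 3
    then have "- \<epsilon> * \<bar>y - ?t\<bar> \<le> - \<epsilon> * \<bar>x - ?t\<bar>" using xy e by (simp add: mult_left_mono)
    then show ?thesis using 3 xy unfolding gf_def intended_def flip_prob_def by simp
  qed
qed

lemma gf_jump:
  assumes e: "\<epsilon> > 0" and x: "thr \<sigma> l - 2 < x" "x \<le> thr \<sigma> l - 1"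
  shows "gf \<sigma> \<epsilon> l (2 + x) - gf \<sigma> \<epsilon> l x \<ge> (1 - exp (- \<epsilon>)) / 2"
proof -
  let ?t = "thr \<sigma> l"
  have fb: "\<And>s. 0 < flip_prob \<sigma> \<epsilon> l s \<and> flip_prob \<sigma> \<epsilon> l s \<le> 1/2" using flip_bounds[OF e] by blast
  have a: "gf \<sigma> \<epsilon> l (2 + x) \<ge> 1/2" using x fb[of "2+x"] unfolding gf_def intended_def by simp
  have "- \<epsilon> * \<bar>x - ?t\<bar> \<le> - \<epsilon> * 1" using x e by (intro mult_left_mono_neg) auto
  then have "exp (- \<epsilon> * \<bar>x - ?t\<bar>) \<le> exp (- \<epsilon>)" by simp
  then have b: "gf \<sigma> \<epsilon> l x \<le> exp (- \<epsilon>) / 2" using x unfolding gf_def intended_def flip_prob_def by simp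
  show ?thesis using a b by simp
qed

lemma dens_lb:
  assumes s: "\<sigma> > 0" and x: "t - 2 < x" "x \<le> t - 1" and T: "\<bar>t\<bar> \<le> T"
  shows "normal_density (-1) \<sigma> x \<ge> normal_density 0 \<sigma> (T + 3)"
proof -
  have "\<bar>x + 1\<bar> \<le> T + 3" using x T by linarith
  then have "(x + 1)\<^sup>2 \<le> (T + 3)\<^sup>2" by (metis abs_le_square_iff abs_of_nonneg dual_order.trans abs_ge_zero) 
  then have "- ((T + 3)\<^sup>2) / (2 * \<sigma>\<^sup>2) \<le> - ((x - (-1))\<^sup>2) / (2 * \<sigma>\<^sup>2)" using s
    by (intro divide_right_mono) auto
  then have "exp (- ((T + 3)\<^sup>2) / (2 * \<sigma>\<^sup>2)) \<le> exp (- ((x - (-1))\<^sup>2) / (2 * \<sigma>\<^sup>2))" by simp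
  then show ?thesis unfolding normal_density_def using s by (simp add: divide_right_mono)
qed



lemma sd_integrable_bounded:
  assumes s: "\<sigma> > 0" and m[measurable]: "f \<in> borel_measurable borel" and b: "\<And>x. \<bar>f x\<bar> \<le> 1"
  shows "integrable lborel (\<lambda>x. normal_density \<theta> \<sigma> x * f x)"
proof -
  interpret prob_space "signal_dist \<sigma> \<theta>" by (rule sd_prob[OF s])
  have "integrable (signal_dist \<sigma> \<theta>) f"
    by (rule integrable_const_bound[where B=1]) (use b in auto)
  then show ?thesis unfolding signal_dist_def
    by (subst (asm) integrable_density) auto
qed

lemma rpp_lborel:
  assumes s: "\<sigma> > 0"
  shows "report_plus_prob \<sigma> \<epsilon> \<theta> l = (\<integral>x. normal_density \<theta> \<sigma> x * gf \<sigma> \<epsilon> l x \<partial>lborel)"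
  unfolding rpp_gf signal_dist_def
  by (subst integral_density) auto

lemma gap:
  assumes s: "\<sigma> > 0" and e: "\<epsilon> > 0" and T: "\<bar>thr \<sigma> l\<bar> \<le> T"
  shows "report_plus_prob \<sigma> \<epsilon> 1 l - report_plus_prob \<sigma> \<epsilon> (-1) l
           \<ge> normal_density 0 \<sigma> (T + 3) * ((1 - exp (- \<epsilon>)) / 2)"
proof -
  let ?g = "gf \<sigma> \<epsilon> l"
  let ?t = "thr \<sigma> l"
  let ?C = "normal_density 0 \<sigma> (T + 3) * ((1 - exp (- \<epsilon>)) / 2)"
  have gb: "\<And>x. \<bar>?g x\<bar> \<le> 1" using gf_bounds[OF e] by (simp add: abs_le_iff less_imp_le)
  have "report_plus_prob \<sigma> \<epsilon> 1 l = (\<integral>x. normal_density 1 \<sigma> (2 + 1 * x) * ?g (2 + 1 * x) \<partial>lborel)"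
    unfolding rpp_lborel[OF s] by (subst lborel_integral_real_affine[where c=1 and t=2]) auto
  also have "\<dots> = (\<integral>x. normal_density (-1) \<sigma> x * ?g (2 + x) \<partial>lborel)"
    by (intro Bochner_Integration.integral_cong) (auto simp: normal_density_def add.commute)
  finally have p1: "report_plus_prob \<sigma> \<epsilon> 1 l = (\<integral>x. normal_density (-1) \<sigma> x * ?g (2 + x) \<partial>lborel)" .
  have i1: "integrable lborel (\<lambda>x. normal_density (-1) \<sigma> x * ?g (2 + x))"
    by (rule sd_integrable_bounded[OF s]) (auto simp: gb)
  have i2: "integrable lborel (\<lambda>x. normal_density (-1) \<sigma> x * ?g x)"
    by (rule sd_integrable_bounded[OF s]) (auto simp: gb)
  have "report_plus_prob \<sigma> \<epsilon> 1 l - report_plus_prob \<sigma> \<epsilon> (-1) l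
     = (\<integral>x. normal_density (-1) \<sigma> x * (?g (2 + x) - ?g x) \<partial>lborel)"
    unfolding p1 rpp_lborel[OF s, of _ "-1"]
    by (subst Bochner_Integration.integral_diff[OF i1 i2, symmetric]) (simp add: algebra_simps)
  also have "\<dots> \<ge> (\<integral>x. ?C * indicator {?t - 2 <.. ?t - 1} x \<partial>lborel)"
  proof (rule integral_mono)
    show "integrable lborel (\<lambda>x. ?C * indicator {?t - 2 <.. ?t - 1} x)" by simp
    show "integrable lborel (\<lambda>x. normal_density (-1) \<sigma> x * (?g (2 + x) - ?g x))"
      using Bochner_Integration.integrable_diff[OF i1 i2] by (simp add: algebra_simps)
    fix x :: real
    show "?C * indicator {?t - 2 <.. ?t - 1} x \<le> normal_density (-1) \<sigma> x * (?g (2 + x) - ?g x)"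
    proof (cases "x \<in> {?t - 2 <.. ?t - 1}")
      case True
      then have "normal_density 0 \<sigma> (T + 3) \<le> normal_density (-1) \<sigma> x"
        using dens_lb[OF s _ _ T] by auto
      moreover have "(1 - exp (- \<epsilon>)) / 2 \<le> ?g (2 + x) - ?g x" using gf_jump[OF e] True by auto
      moreover have "0 \<le> (1 - exp (- \<epsilon>)) / 2" using e by simp
      ultimately have "?C \<le> normal_density (-1) \<sigma> x * (?g (2 + x) - ?g x)"
        by (intro mult_mono) auto
      then show ?thesis using True by simp
    next
      case False
      have "?g x \<le> ?g (2 + x)" by (rule gf_mono[OF e]) simp
      then show ?thesis using False by simp
    qed
  qed
  also have "(\<integral>x. ?C * indicator {?t - 2 <.. ?t - 1} x \<partial>lborel) = ?C" by simp
  finally show ?thesis .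
qed



primrec Wr :: "real \<Rightarrow> real \<Rightarrow> real \<Rightarrow> bool list \<Rightarrow> real" where
  "Wr \<sigma> \<epsilon> \<theta> [] = 1"
| "Wr \<sigma> \<epsilon> \<theta> (b # rs) = Wr \<sigma> \<epsilon> \<theta> rs * report_prob \<sigma> \<epsilon> \<theta> (public_llr \<sigma> \<epsilon> (rev rs)) b"

definition W :: "real \<Rightarrow> real \<Rightarrow> real \<Rightarrow> bool list \<Rightarrow> real" where
  "W \<sigma> \<epsilon> \<theta> xs = Wr \<sigma> \<epsilon> \<theta> (rev xs)"

definition LL :: "nat \<Rightarrow> bool list set" where "LL n = {xs. length xs = n}"

lemma W_nil[simp]: "W \<sigma> \<epsilon> \<theta> [] = 1" unfolding W_def by simp

lemma W_snoc[simp]: "W \<sigma> \<epsilon> \<theta> (xs @ [b]) = W \<sigma> \<epsilon> \<theta> xs * report_prob \<sigma> \<epsilon> \<theta> (public_llr \<sigma> \<epsilon> xs) b"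
  unfolding W_def by simp

lemma llr_snoc[simp]: "public_llr \<sigma> \<epsilon> (xs @ [b]) = llr_update \<sigma> \<epsilon> (public_llr \<sigma> \<epsilon> xs) b"
  unfolding public_llr_def by simp

lemma LL_finite[simp]: "finite (LL n)"
proof -
  have "LL n = {xs. set xs \<subseteq> UNIV \<and> length xs = n}" unfolding LL_def by simp
  then show ?thesis using finite_lists_length_eq[of "UNIV :: bool set" n] by simp
qed

lemma LL_0: "LL 0 = {[]}" unfolding LL_def by auto

lemma sum_LL_Suc:
  "(\<Sum>ys\<in>LL (Suc n). f ys) = (\<Sum>xs\<in>LL n. f (xs @ [True]) + f (xs @ [False]))"
proof -
  have eq: "LL (Suc n) = (\<lambda>(xs, b). xs @ [b]) ` (LL n \<times> UNIV)"
  proof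
    show "LL (Suc n) \<subseteq> (\<lambda>(xs, b). xs @ [b]) ` (LL n \<times> UNIV)"
    proof
      fix ys assume "ys \<in> LL (Suc n)"
      then have "length ys = Suc n" by (simp add: LL_def)
      then have "ys \<noteq> []" by auto
      then have "ys = butlast ys @ [last ys]" by simp
      moreover have "butlast ys \<in> LL n" using \<open>length ys = Suc n\<close> by (simp add: LL_def)
      ultimately show "ys \<in> (\<lambda>(xs, b). xs @ [b]) ` (LL n \<times> UNIV)"
        by (intro image_eqI[where x="(butlast ys, last ys)"]) auto
    qed
  qed (auto simp: LL_def)
  have inj: "inj_on (\<lambda>(xs, b). xs @ [b]) (LL n \<times> UNIV)"
    by (auto simp: inj_on_def)
  have "(\<Sum>ys\<in>LL (Suc n). f ys) = (\<Sum>(xs,b)\<in>LL n \<times> UNIV. f (xs @ [b]))"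
    unfolding eq by (subst sum.reindex[OF inj]) (simp add: case_prod_unfold)
  also have "\<dots> = (\<Sum>xs\<in>LL n. \<Sum>b\<in>UNIV. f (xs @ [b]))"
    by (subst sum.cartesian_product) simp
  also have "\<dots> = (\<Sum>xs\<in>LL n. f (xs @ [True]) + f (xs @ [False]))"
    by (simp add: UNIV_bool add.commute)
  finally show ?thesis .
qed

context
  fixes \<sigma> \<epsilon> :: real
  assumes sg: "\<sigma> > 0" and ep: "\<epsilon> > 0"
begin

lemma rp_pos: "0 < report_prob \<sigma> \<epsilon> \<theta> l b"
  using rpp_bounds[OF sg ep, of \<theta> l] unfolding report_prob_def by auto

lemma W_pos: "0 < W \<sigma> \<epsilon> \<theta> xs"
  by (induction xs rule: rev_induct) (auto simp: rp_pos)

lemma W_sum: "(\<Sum>xs\<in>LL n. W \<sigma> \<epsilon> \<theta> xs) = 1"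
  by (induction n) (auto simp: LL_0 sum_LL_Suc report_prob_def distrib_left[symmetric])

lemma W_ratio: "W \<sigma> \<epsilon> 1 xs = exp (public_llr \<sigma> \<epsilon> xs) * W \<sigma> \<epsilon> (-1) xs"
proof (induction xs rule: rev_induct)
  case Nil
  then show ?case by (simp add: public_llr_def)
next
  case (snoc b xs)
  let ?l = "public_llr \<sigma> \<epsilon> xs"
  have r: "exp (llr_update \<sigma> \<epsilon> ?l b) = exp ?l * (report_prob \<sigma> \<epsilon> 1 ?l b / report_prob \<sigma> \<epsilon> (-1) ?l b)"
    unfolding llr_update_def using rp_pos by (simp add: exp_add)
  show ?case using snoc rp_pos[of "-1" ?l b] by (simp add: r field_simps)
qed

lemma set_hist: "set_pmf (history \<sigma> \<epsilon> \<theta> n) \<subseteq> LL n"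
  by (induction n) (auto simp: LL_def)

lemma pmf_hist: "xs \<in> LL n \<Longrightarrow> pmf (history \<sigma> \<epsilon> \<theta> n) xs = W \<sigma> \<epsilon> \<theta> xs"
proof (induction n arbitrary: xs)
  case 0
  then show ?case by (simp add: LL_0)
next
  case (Suc n ys)
  let ?x = "butlast ys"
  let ?B = "\<lambda>xs. bernoulli_pmf (report_plus_prob \<sigma> \<epsilon> \<theta> (public_llr \<sigma> \<epsilon> xs))"
  have "ys \<noteq> []" using Suc.prems by (auto simp: LL_def)
  then have ys: "ys = ?x @ [last ys]" by simp
  have x: "?x \<in> LL n" using Suc.prems by (auto simp: LL_def)
  have "pmf (history \<sigma> \<epsilon> \<theta> (Suc n)) ys
      = (\<integral>x. pmf (map_pmf (\<lambda>b. x @ [b]) (?B x)) ys \<partial>measure_pmf (history \<sigma> \<epsilon> \<theta> n))"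
    by (simp add: pmf_bind)
  also have "\<dots> = (\<Sum>a\<in>{?x}. pmf (map_pmf (\<lambda>b. a @ [b]) (?B a)) ys * pmf (history \<sigma> \<epsilon> \<theta> n) a)"
  proof (rule integral_measure_pmf_real)
    fix a assume "pmf (map_pmf (\<lambda>b. a @ [b]) (?B a)) ys \<noteq> 0"
    then have "ys \<in> set_pmf (map_pmf (\<lambda>b. a @ [b]) (?B a))" by (simp add: pmf_eq_0_set_pmf)
    then show "a \<in> {?x}" by auto
  qed simp
  also have "\<dots> = pmf (map_pmf (\<lambda>b. ?x @ [b]) (?B ?x)) (?x @ [last ys]) * W \<sigma> \<epsilon> \<theta> ?x"
    using Suc.IH[OF x] ys by simp
  also have "\<dots> = pmf (?B ?x) (last ys) * W \<sigma> \<epsilon> \<theta> ?x"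
    by (subst pmf_map_inj') (auto simp: inj_def)
  also have "\<dots> = W \<sigma> \<epsilon> \<theta> ys"
    using rpp_bounds[OF sg ep, of \<theta> "public_llr \<sigma> \<epsilon> ?x"]
    by (subst (3) ys) (cases "last ys"; simp add: report_prob_def)
  finally show ?case .
qed

lemma E_hist: "measure_pmf.expectation (history \<sigma> \<epsilon> \<theta> n) f = (\<Sum>xs\<in>LL n. f xs * W \<sigma> \<epsilon> \<theta> xs)"
  by (subst integral_measure_pmf_real[where A="LL n"]) (use set_hist in \<open>auto simp: pmf_hist\<close>)

end



lemma hineq:
  fixes p q :: real
  assumes p0: "0 \<le> p" and p1: "p \<le> 1" and q0: "0 \<le> q" and q1: "q \<le> 1"
  shows "sqrt (p * q) + sqrt ((1 - p) * (1 - q)) \<le> 1 - (p - q)\<^sup>2 / 8"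
proof -
  define a where "a = sqrt p"
  define b where "b = sqrt q"
  define c where "c = sqrt (1 - p)"
  define d where "d = sqrt (1 - q)"
  have a2: "a\<^sup>2 = p" "b\<^sup>2 = q" "c\<^sup>2 = 1 - p" "d\<^sup>2 = 1 - q"
    unfolding a_def b_def c_def d_def using p0 p1 q0 q1 by (simp_all add: real_sqrt_pow2)
  have nn: "0 \<le> a" "0 \<le> b" "0 \<le> c" "0 \<le> d" using p0 p1 q0 q1 by (auto simp: a_def b_def c_def d_def)
  have le1: "a \<le> 1" "b \<le> 1" using assms by (auto simp: a_def b_def)
  have e1: "sqrt (p * q) + sqrt ((1 - p) * (1 - q)) = a * b + c * d"
    by (simp add: a_def b_def c_def d_def real_sqrt_mult)
  have e2: "a * b + c * d = 1 - ((a - b)\<^sup>2 + (c - d)\<^sup>2) / 2"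
  proof -
    have "(a - b)\<^sup>2 + (c - d)\<^sup>2 = (a\<^sup>2 + c\<^sup>2) + (b\<^sup>2 + d\<^sup>2) - 2 * (a * b + c * d)"
      by (simp add: power2_eq_square algebra_simps)
    moreover have "a\<^sup>2 + c\<^sup>2 = 1" "b\<^sup>2 + d\<^sup>2 = 1" using a2 by simp_all
    ultimately show ?thesis by (simp add: field_simps)
  qed
  have "(p - q)\<^sup>2 = (a - b)\<^sup>2 * (a + b)\<^sup>2" using a2 by (simp add: power2_eq_square algebra_simps)
  also have "\<dots> \<le> (a - b)\<^sup>2 * 4"
  proof (rule mult_left_mono)
    have "a + b \<le> 2" using le1 by simp
    then have "(a + b)\<^sup>2 \<le> 2\<^sup>2" using nn by (intro power_mono) auto
    then show "(a + b)\<^sup>2 \<le> 4" by simp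
  qed simp
  finally have "(p - q)\<^sup>2 \<le> (a - b)\<^sup>2 * 4" .
  moreover have "0 \<le> (c - d)\<^sup>2" by simp
  ultimately show ?thesis unfolding e1 e2 by (simp add: field_simps add_increasing2)
qed

context
  fixes \<sigma> \<epsilon> :: real
  assumes sg: "\<sigma> > 0" and ep: "\<epsilon> > 0"
begin

definition Bs :: "nat \<Rightarrow> real" where
  "Bs n = (\<Sum>xs\<in>LL n. sqrt (W \<sigma> \<epsilon> 1 xs * W \<sigma> \<epsilon> (-1) xs))"

definition Ds :: "real \<Rightarrow> nat \<Rightarrow> real" where
  "Ds M n = (\<Sum>xs\<in>LL n. if \<bar>public_llr \<sigma> \<epsilon> xs\<bar> \<le> M then sqrt (W \<sigma> \<epsilon> 1 xs * W \<sigma> \<epsilon> (-1) xs) else 0)"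

definition cM :: "real \<Rightarrow> real" where
  "cM M = (normal_density 0 \<sigma> (\<sigma>\<^sup>2 * M / 2 + 3) * ((1 - exp (- \<epsilon>)) / 2))\<^sup>2 / 8"

lemma Wnn: "0 \<le> W \<sigma> \<epsilon> \<theta> xs" using W_pos[OF sg ep] by (simp add: less_imp_le)

lemma cM_pos: "cM M > 0"
proof -
  have "normal_density 0 \<sigma> (\<sigma>\<^sup>2 * M / 2 + 3) > 0" using sg by (simp add: normal_density_def)
  moreover have "(1 - exp (- \<epsilon>)) / 2 > 0" using ep by simp
  ultimately show ?thesis unfolding cM_def by simp
qed

lemma h_bound:
  fixes l M :: real
  defines "p \<equiv> report_plus_prob \<sigma> \<epsilon> 1 l" and "q \<equiv> report_plus_prob \<sigma> \<epsilon> (-1) l"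
  shows "sqrt (p * q) + sqrt ((1 - p) * (1 - q)) \<le> 1 - (if \<bar>l\<bar> \<le> M then cM M else 0)"
proof -
  have pb: "0 \<le> p" "p \<le> 1" "0 \<le> q" "q \<le> 1" using rpp_bounds[OF sg ep] unfolding p_def q_def
    by (auto simp: less_imp_le)
  have h: "sqrt (p * q) + sqrt ((1 - p) * (1 - q)) \<le> 1 - (p - q)\<^sup>2 / 8" by (rule hineq[OF pb])
  show ?thesis
  proof (cases "\<bar>l\<bar> \<le> M")
    case True
    have "\<bar>thr \<sigma> l\<bar> = \<sigma>\<^sup>2 * \<bar>l\<bar> / 2" unfolding thr_def by (simp add: abs_mult)
    also have "\<dots> \<le> \<sigma>\<^sup>2 * M / 2" using True by (simp add: mult_left_mono)
    finally have T: "\<bar>thr \<sigma> l\<bar> \<le> \<sigma>\<^sup>2 * M / 2" .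
    let ?k = "normal_density 0 \<sigma> (\<sigma>\<^sup>2 * M / 2 + 3) * ((1 - exp (- \<epsilon>)) / 2)"
    have g: "p - q \<ge> ?k" using gap[OF sg ep T] unfolding p_def q_def .
    have k0: "0 \<le> ?k" using ep by simp
    have "?k\<^sup>2 \<le> (p - q)\<^sup>2" using g k0 by (intro power_mono) auto
    then have "cM M \<le> (p - q)\<^sup>2 / 8" unfolding cM_def by simp
    then show ?thesis using h True by simp
  next
    case False
    have "0 \<le> (p - q)\<^sup>2 / 8" by simp
    then show ?thesis using h False by (simp only: if_False)
  qed
qed

lemma Bs_step: "Bs (Suc n) \<le> Bs n - cM M * Ds M n"
proof -
  have "Bs (Suc n) = (\<Sum>xs\<in>LL n. sqrt (W \<sigma> \<epsilon> 1 xs * W \<sigma> \<epsilon> (-1) xs) *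
          (sqrt (report_plus_prob \<sigma> \<epsilon> 1 (public_llr \<sigma> \<epsilon> xs) * report_plus_prob \<sigma> \<epsilon> (-1) (public_llr \<sigma> \<epsilon> xs))
         + sqrt ((1 - report_plus_prob \<sigma> \<epsilon> 1 (public_llr \<sigma> \<epsilon> xs)) * (1 - report_plus_prob \<sigma> \<epsilon> (-1) (public_llr \<sigma> \<epsilon> xs)))))"
    unfolding Bs_def sum_LL_Suc
    by (intro sum.cong refl) (simp add: report_prob_def real_sqrt_mult[symmetric] distrib_left algebra_simps)
  also have "\<dots> \<le> (\<Sum>xs\<in>LL n. sqrt (W \<sigma> \<epsilon> 1 xs * W \<sigma> \<epsilon> (-1) xs) *
          (1 - (if \<bar>public_llr \<sigma> \<epsilon> xs\<bar> \<le> M then cM M else 0)))"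
    by (intro sum_mono mult_left_mono h_bound) (simp add: Wnn)
  also have "\<dots> = Bs n - cM M * Ds M n"
    unfolding Bs_def Ds_def sum_distrib_left sum_subtractf[symmetric]
    by (intro sum.cong refl) (auto simp: Wnn algebra_simps)
  finally show ?thesis .
qed

lemma Bs_nonneg: "Bs n \<ge> 0" unfolding Bs_def by (intro sum_nonneg) (simp add: Wnn)
lemma Ds_nonneg: "Ds M n \<ge> 0" unfolding Ds_def by (intro sum_nonneg) (simp add: Wnn)
lemma Bs_0: "Bs 0 = 1" unfolding Bs_def by (simp add: LL_0)

lemma Ds_lim: "(\<lambda>n. Ds M n) \<longlonglongrightarrow> 0"
proof -
  have part: "cM M * (\<Sum>k<N. Ds M k) \<le> 1 - Bs N" for N
  proof (induction N)
    case 0 then show ?case by (simp add: Bs_0)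
  next
    case (Suc N) then show ?case using Bs_step[of N M] by (simp add: distrib_left)
  qed
  have "summable (\<lambda>n. Ds M n)"
  proof (rule bounded_imp_summable)
    fix N
    have "cM M * (\<Sum>k<Suc N. Ds M k) \<le> 1" using part[of "Suc N"] Bs_nonneg[of "Suc N"] by simp
    then have "(\<Sum>k<Suc N. Ds M k) \<le> 1 / cM M" using cM_pos by (simp add: field_simps)
    then show "(\<Sum>k\<le>N. Ds M k) \<le> 1 / cM M" by (simp add: lessThan_Suc_atMost)
  qed (rule Ds_nonneg)
  then show ?thesis by (rule summable_LIMSEQ_zero)
qed

end



context
  fixes \<sigma> \<epsilon> :: real
  assumes sg: "\<sigma> > 0" and ep: "\<epsilon> > 0"
begin

definition Af :: "real \<Rightarrow> real" where
  "Af l = measure (signal_dist \<sigma> 1) {s. \<not> intended \<sigma> l s}"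
definition Bf :: "real \<Rightarrow> real" where
  "Bf l = measure (signal_dist \<sigma> (-1)) {s. intended \<sigma> l s}"

lemma int_set: "{s. intended \<sigma> l s} = {thr \<sigma> l <..}" unfolding intended_def by auto
lemma nint_set: "{s. \<not> intended \<sigma> l s} = {.. thr \<sigma> l}" unfolding intended_def by auto

lemma sd_space[simp]: "space (signal_dist \<sigma> \<theta>) = UNIV" unfolding signal_dist_def by simp

lemma Af_bounds: "0 \<le> Af l \<and> Af l \<le> 1"
proof -
  interpret prob_space "signal_dist \<sigma> 1" by (rule sd_prob[OF sg])
  show ?thesis unfolding Af_def by simp
qed

lemma Bf_bounds: "0 \<le> Bf l \<and> Bf l \<le> 1"
proof -
  interpret prob_space "signal_dist \<sigma> (-1)" by (rule sd_prob[OF sg])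
  show ?thesis unfolding Bf_def by simp
qed

lemma Af_mono: "M \<le> l \<Longrightarrow> Af l \<le> Af M"
proof -
  assume "M \<le> l"
  interpret prob_space "signal_dist \<sigma> 1" by (rule sd_prob[OF sg])
  have "thr \<sigma> l \<le> thr \<sigma> M" unfolding thr_def using \<open>M \<le> l\<close> sg by (simp add: mult_left_mono)
  then show ?thesis unfolding Af_def nint_set by (intro finite_measure_mono) auto
qed

lemma Bf_mono: "l \<le> M \<Longrightarrow> Bf l \<le> Bf M"
proof -
  assume "l \<le> M"
  interpret prob_space "signal_dist \<sigma> (-1)" by (rule sd_prob[OF sg])
  have "thr \<sigma> M \<le> thr \<sigma> l" unfolding thr_def using \<open>l \<le> M\<close> sg by (simp add: mult_left_mono)
  then show ?thesis unfolding Bf_def int_set by (intro finite_measure_mono) auto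
qed

lemma Af_lim: "(\<lambda>m::nat. Af (real m)) \<longlonglongrightarrow> 0"
proof -
  interpret prob_space "signal_dist \<sigma> 1" by (rule sd_prob[OF sg])
  let ?A = "\<lambda>m::nat. {.. thr \<sigma> (real m)}"
  have "(\<lambda>m. measure (signal_dist \<sigma> 1) (?A m)) \<longlonglongrightarrow> measure (signal_dist \<sigma> 1) (\<Inter>m. ?A m)"
  proof (rule finite_Lim_measure_decseq)
    show "decseq ?A" unfolding decseq_def thr_def using sg by (auto simp: mult_left_mono)
  qed auto
  moreover have "(\<Inter>m. ?A m) = {}"
  proof (safe)
    fix s assume "s \<in> (\<Inter>m. ?A m)"
    obtain m :: nat where m: "- 2 * s / \<sigma>\<^sup>2 < real m" using reals_Archimedean2 by blast
    then have "- 2 * s < \<sigma>\<^sup>2 * real m" using sg by (simp add: field_simps)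
    then have "\<not> s \<le> thr \<sigma> (real m)" unfolding thr_def by simp
    with \<open>s \<in> (\<Inter>m. ?A m)\<close> show "s \<in> {}" by auto
  qed
  ultimately show ?thesis unfolding Af_def nint_set by simp
qed

lemma Bf_lim: "(\<lambda>m::nat. Bf (- real m)) \<longlonglongrightarrow> 0"
proof -
  interpret prob_space "signal_dist \<sigma> (-1)" by (rule sd_prob[OF sg])
  let ?A = "\<lambda>m::nat. {thr \<sigma> (- real m) <..}"
  have "(\<lambda>m. measure (signal_dist \<sigma> (-1)) (?A m)) \<longlonglongrightarrow> measure (signal_dist \<sigma> (-1)) (\<Inter>m. ?A m)"
  proof (rule finite_Lim_measure_decseq)
    show "decseq ?A" unfolding decseq_def thr_def using sg by (auto simp: mult_left_mono)
  qed auto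
  moreover have "(\<Inter>m. ?A m) = {}"
  proof (safe)
    fix s assume "s \<in> (\<Inter>m. ?A m)"
    obtain m :: nat where m: "2 * s / \<sigma>\<^sup>2 < real m" using reals_Archimedean2 by blast
    then have "2 * s < \<sigma>\<^sup>2 * real m" using sg by (simp add: field_simps)
    then have "\<not> thr \<sigma> (- real m) < s" unfolding thr_def by simp
    with \<open>s \<in> (\<Inter>m. ?A m)\<close> show "s \<in> {}" by auto
  qed
  ultimately show ?thesis unfolding Bf_def int_set by simp
qed

lemma err_eq: "1 - prob_correct \<sigma> \<epsilon> n =
   (\<Sum>xs\<in>LL n. W \<sigma> \<epsilon> 1 xs * Af (public_llr \<sigma> \<epsilon> xs) + W \<sigma> \<epsilon> (-1) xs * Bf (public_llr \<sigma> \<epsilon> xs)) / 2"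
proof -
  have c1: "measure (signal_dist \<sigma> 1) {s. intended \<sigma> l s} = 1 - Af l" for l
  proof -
    interpret prob_space "signal_dist \<sigma> 1" by (rule sd_prob[OF sg])
    have "{s. intended \<sigma> l s} = space (signal_dist \<sigma> 1) - {s. \<not> intended \<sigma> l s}" by auto
    then show ?thesis unfolding Af_def using prob_compl[of "{s. \<not> intended \<sigma> l s}"]
      by (simp add: nint_set)
  qed
  have c2: "measure (signal_dist \<sigma> (-1)) {s. \<not> intended \<sigma> l s} = 1 - Bf l" for l
  proof -
    interpret prob_space "signal_dist \<sigma> (-1)" by (rule sd_prob[OF sg])
    have "{s. \<not> intended \<sigma> l s} = space (signal_dist \<sigma> (-1)) - {s. intended \<sigma> l s}" by auto
    then show ?thesis unfolding Bf_def using prob_compl[of "{s. intended \<sigma> l s}"]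
      by (simp add: int_set)
  qed
  have "prob_correct \<sigma> \<epsilon> n = (1/2) * (\<Sum>xs\<in>LL n. (1 - Af (public_llr \<sigma> \<epsilon> xs)) * W \<sigma> \<epsilon> 1 xs)
      + (1/2) * (\<Sum>xs\<in>LL n. (1 - Bf (public_llr \<sigma> \<epsilon> xs)) * W \<sigma> \<epsilon> (-1) xs)"
    unfolding prob_correct_def E_hist[OF sg ep] c1 c2 ..
  also have "\<dots> = (1/2) * (1 - (\<Sum>xs\<in>LL n. Af (public_llr \<sigma> \<epsilon> xs) * W \<sigma> \<epsilon> 1 xs))
      + (1/2) * (1 - (\<Sum>xs\<in>LL n. Bf (public_llr \<sigma> \<epsilon> xs) * W \<sigma> \<epsilon> (-1) xs))"
    by (simp add: left_diff_distrib sum_subtractf W_sum[OF sg ep])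
  finally show ?thesis by (simp add: sum.distrib field_simps mult.commute)
qed

lemma sqrt_W: "sqrt (W \<sigma> \<epsilon> 1 xs * W \<sigma> \<epsilon> (-1) xs) = exp (public_llr \<sigma> \<epsilon> xs / 2) * W \<sigma> \<epsilon> (-1) xs"
proof -
  let ?l = "public_llr \<sigma> \<epsilon> xs" and ?w = "W \<sigma> \<epsilon> (-1) xs"
  have w: "?w > 0" by (rule W_pos[OF sg ep])
  have "W \<sigma> \<epsilon> 1 xs * ?w = (exp (?l / 2) * ?w)\<^sup>2"
    unfolding W_ratio[OF sg ep] by (simp add: power2_eq_square exp_add[symmetric] algebra_simps)
  then show ?thesis using w by simp
qed

lemma perxs:
  assumes M: "0 \<le> M"
  shows "W \<sigma> \<epsilon> 1 xs * Af (public_llr \<sigma> \<epsilon> xs) + W \<sigma> \<epsilon> (-1) xs * Bf (public_llr \<sigma> \<epsilon> xs)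
    \<le> 2 * exp (M / 2) * (if \<bar>public_llr \<sigma> \<epsilon> xs\<bar> \<le> M then sqrt (W \<sigma> \<epsilon> 1 xs * W \<sigma> \<epsilon> (-1) xs) else 0)
      + (Af M + exp (- M)) * W \<sigma> \<epsilon> 1 xs + (Bf (- M) + exp (- M)) * W \<sigma> \<epsilon> (-1) xs"
proof -
  let ?l = "public_llr \<sigma> \<epsilon> xs" and ?w = "W \<sigma> \<epsilon> (-1) xs" and ?v = "W \<sigma> \<epsilon> 1 xs"
  have w: "?w > 0" by (rule W_pos[OF sg ep])
  have v: "?v = exp ?l * ?w" by (rule W_ratio[OF sg ep])
  have vp: "?v > 0" by (rule W_pos[OF sg ep])
  have A: "0 \<le> Af ?l" "Af ?l \<le> 1" "0 \<le> Af M" using Af_bounds by auto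
  have B: "0 \<le> Bf ?l" "Bf ?l \<le> 1" "0 \<le> Bf (-M)" using Bf_bounds by auto
  have rest: "0 \<le> (Af M + exp (- M)) * ?v + (Bf (- M) + exp (- M)) * ?w"
    using A B w vp by (intro add_nonneg_nonneg mult_nonneg_nonneg) auto
  consider "\<bar>?l\<bar> \<le> M" | "M < ?l" | "?l < - M" by linarith
  then show ?thesis
  proof cases
    case 1
    have "?v * Af ?l + ?w * Bf ?l \<le> ?v + ?w"
      using A B w vp by (intro add_mono) (auto simp: mult_left_le)
    also have "\<dots> = (exp (?l/2) * exp (?l/2) + exp (-?l/2) * exp (?l/2)) * ?w"
      unfolding v by (simp add: exp_add[symmetric] algebra_simps)
    also have "\<dots> \<le> (exp (M/2) * exp (?l/2) + exp (M/2) * exp (?l/2)) * ?w"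
      using 1 w by (intro mult_right_mono add_mono mult_right_mono) auto
    also have "\<dots> = 2 * exp (M / 2) * sqrt (?v * ?w)" unfolding sqrt_W by simp
    finally show ?thesis using 1 rest by simp
  next
    case 2
    have "?v * Af ?l \<le> ?v * Af M" using Af_mono[of M ?l] 2 vp by (intro mult_left_mono) auto
    moreover have "?w * Bf ?l \<le> exp (- M) * ?v"
    proof -
      have "?w * Bf ?l \<le> ?w" using B w by (simp add: mult_left_le)
      also have "?w = exp (- ?l) * ?v" unfolding v by (simp add: exp_minus field_simps)
      also have "\<dots> \<le> exp (- M) * ?v" using 2 vp by (intro mult_right_mono) auto
      finally show ?thesis .
    qed
    moreover have "0 \<le> (Bf (- M) + exp (- M)) * ?w" using B w by simp
    moreover have "\<not> \<bar>?l\<bar> \<le> M" using 2 by linarith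
    ultimately show ?thesis by (simp add: algebra_simps)
  next
    case 3
    have "?w * Bf ?l \<le> ?w * Bf (- M)" using Bf_mono[of ?l "- M"] 3 w by (intro mult_left_mono) auto
    moreover have "?v * Af ?l \<le> exp (- M) * ?w"
    proof -
      have "?v * Af ?l \<le> ?v" using A vp by (simp add: mult_left_le)
      also have "\<dots> \<le> exp (- M) * ?w" unfolding v using 3 w by (intro mult_right_mono) auto
      finally show ?thesis .
    qed
    moreover have "0 \<le> (Af M + exp (- M)) * ?v" using A vp by simp
    moreover have "\<not> \<bar>?l\<bar> \<le> M" using 3 by linarith
    ultimately show ?thesis by (simp add: algebra_simps)
  qed
qed

lemma err_bound:
  assumes M: "0 \<le> M"
  shows "2 * (1 - prob_correct \<sigma> \<epsilon> n) \<le> 2 * exp (M / 2) * Ds \<sigma> \<epsilon> M n + (Af M + exp (- M)) + (Bf (- M) + exp (- M))"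
proof -
  have "2 * (1 - prob_correct \<sigma> \<epsilon> n) = (\<Sum>xs\<in>LL n. W \<sigma> \<epsilon> 1 xs * Af (public_llr \<sigma> \<epsilon> xs) + W \<sigma> \<epsilon> (-1) xs * Bf (public_llr \<sigma> \<epsilon> xs))"
    unfolding err_eq by simp
  also have "\<dots> \<le> (\<Sum>xs\<in>LL n. 2 * exp (M / 2) * (if \<bar>public_llr \<sigma> \<epsilon> xs\<bar> \<le> M then sqrt (W \<sigma> \<epsilon> 1 xs * W \<sigma> \<epsilon> (-1) xs) else 0)
      + (Af M + exp (- M)) * W \<sigma> \<epsilon> 1 xs + (Bf (- M) + exp (- M)) * W \<sigma> \<epsilon> (-1) xs)"
    by (intro sum_mono perxs[OF M])
  also have "\<dots> = 2 * exp (M / 2) * Ds \<sigma> \<epsilon> M n + (Af M + exp (- M)) + (Bf (- M) + exp (- M))"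
    unfolding Ds_def[OF sg ep] sum.distrib sum_distrib_left[symmetric] W_sum[OF sg ep] by simp
  finally show ?thesis .
qed

lemma err_nonneg: "0 \<le> 1 - prob_correct \<sigma> \<epsilon> n"
  unfolding err_eq using Af_bounds Bf_bounds Wnn[OF sg ep]
  by (intro divide_nonneg_nonneg sum_nonneg add_nonneg_nonneg mult_nonneg_nonneg) auto

end



theorem theorem5:
  fixes \<sigma> \<epsilon> :: real
  assumes "\<sigma> > 0" and "\<epsilon> > 0"
  shows "(\<lambda>n. prob_correct \<sigma> \<epsilon> n) \<longlonglongrightarrow> 1"
proof (rule LIMSEQ_I)
  note sg = assms(1) and ep = assms(2)
  fix r :: real assume r: "0 < r"
  have tl: "(\<lambda>m::nat. (Af \<sigma> (real m) + exp (- real m)) + (Bf \<sigma> (- real m) + exp (- real m))) \<longlonglongrightarrow> (0 + 0) + (0 + 0)"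
    by (intro tendsto_add Af_lim[OF sg ep] Bf_lim[OF sg ep]) real_asymp+
  then have "eventually (\<lambda>m::nat. (Af \<sigma> (real m) + exp (- real m)) + (Bf \<sigma> (- real m) + exp (- real m)) < r) sequentially"
    using r by (intro order_tendstoD) auto
  then obtain m :: nat where m: "(Af \<sigma> (real m) + exp (- real m)) + (Bf \<sigma> (- real m) + exp (- real m)) < r"
    by (auto simp: eventually_sequentially)
  have "(\<lambda>n. 2 * exp (real m / 2) * Ds \<sigma> \<epsilon> (real m) n) \<longlonglongrightarrow> 2 * exp (real m / 2) * 0"
    by (intro tendsto_mult_left Ds_lim[OF sg ep])
  then have "eventually (\<lambda>n. 2 * exp (real m / 2) * Ds \<sigma> \<epsilon> (real m) n < r) sequentially"
    using r by (intro order_tendstoD) auto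
  then obtain N where N: "\<And>n. n \<ge> N \<Longrightarrow> 2 * exp (real m / 2) * Ds \<sigma> \<epsilon> (real m) n < r"
    by (auto simp: eventually_sequentially)
  show "\<exists>no. \<forall>n\<ge>no. norm (prob_correct \<sigma> \<epsilon> n - 1) < r"
  proof (intro exI allI impI)
    fix n assume "n \<ge> N"
    have "2 * (1 - prob_correct \<sigma> \<epsilon> n) < 2 * r"
      using err_bound[OF sg ep, of "real m" n] N[OF \<open>n \<ge> N\<close>] m by simp
    moreover have "0 \<le> 1 - prob_correct \<sigma> \<epsilon> n" by (rule err_nonneg[OF sg ep])
    ultimately show "norm (prob_correct \<sigma> \<epsilon> n - 1) < r" by simp
  qed
qed

end
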